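(* Let $n>3$ and let $a<b<c$ be elements of $\mathcal{C}_n$. Then the triangle $\triangle^{(n)}\{a,b,c\}$ has at least one right identity and has no left identity.
   Context: $\mathcal{C}_n=\{0,1,\dots,n-1\}$ with its usual order; $\widehat{\mathcal{E}}_{\mathcal{C}_n}$ is the set of all order-preserving maps $\mathcal{C}_n\to\mathcal{C}_n$ (not required to fix $0$), a semiring with $(\alpha+\beta)(x)=\max(\alpha(x),\beta(x))$ and $(\alpha\cdot\beta)(x)=\beta(\alpha(x))$. The triangle $\triangle^{(n)}\{a,b,c\}$ is the subsemiring of all $\alpha\in\widehat{\mathcal{E}}_{\mathcal{C}_n}$ with image contained in $\{a,b,c\}$. A right (resp. left) identity of a semiring $R$ is $e\in R$ with $xe=x$ (resp. $ex=x$) for all $x\in R$. *)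

theory Defs
  imports Main
begin

text \<open>The chain C_n = {0,...,n-1}. Maps C_n -> C_n are represented as functions
  nat => nat that are extensional (value 0 outside {0..<n}).\<close>

definition chain :: "nat \<Rightarrow> nat set" where
  "chain n = {0..<n}"

text \<open>All order-preserving maps C_n -> C_n (not required to fix 0).\<close>
definition endo_hat :: "nat \<Rightarrow> (nat \<Rightarrow> nat) set" where
  "endo_hat n = {\<alpha>. (\<forall>x \<in> chain n. \<alpha> x \<in> chain n)
                    \<and> (\<forall>x \<in> chain n. \<forall>y \<in> chain n. x \<le> y \<longrightarrow> \<alpha> x \<le> \<alpha> y)
                    \<and> (\<forall>x. x \<notin> chain n \<longrightarrow> \<alpha> x = 0)}"

definition endo_add :: "nat \<Rightarrow> (nat \<Rightarrow> nat) \<Rightarrow> (nat \<Rightarrow> nat) \<Rightarrow> (nat \<Rightarrow> nat)" where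
  "endo_add n \<alpha> \<beta> = (\<lambda>x. if x \<in> chain n then max (\<alpha> x) (\<beta> x) else 0)"

definition endo_mult :: "nat \<Rightarrow> (nat \<Rightarrow> nat) \<Rightarrow> (nat \<Rightarrow> nat) \<Rightarrow> (nat \<Rightarrow> nat)" where
  "endo_mult n \<alpha> \<beta> = (\<lambda>x. if x \<in> chain n then \<beta> (\<alpha> x) else 0)"

definition triangle :: "nat \<Rightarrow> nat \<Rightarrow> nat \<Rightarrow> nat \<Rightarrow> (nat \<Rightarrow> nat) set" where
  "triangle n a b c = {\<alpha> \<in> endo_hat n. \<alpha> ` chain n \<subseteq> {a, b, c}}"

definition is_right_identity :: "nat \<Rightarrow> (nat \<Rightarrow> nat) set \<Rightarrow> (nat \<Rightarrow> nat) \<Rightarrow> bool" where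
  "is_right_identity n R e \<longleftrightarrow> e \<in> R \<and> (\<forall>x \<in> R. endo_mult n x e = x)"

definition is_left_identity :: "nat \<Rightarrow> (nat \<Rightarrow> nat) set \<Rightarrow> (nat \<Rightarrow> nat) \<Rightarrow> bool" where
  "is_left_identity n R e \<longleftrightarrow> e \<in> R \<and> (\<forall>x \<in> R. endo_mult n e x = x)"

end

theory Submission
  imports Defs
begin

theorem proposition24:
  fixes n a b c :: nat
  assumes "n > 3" and "a \<in> chain n" and "b \<in> chain n" and "c \<in> chain n"
    and "a < b" and "b < c"
  shows "(\<exists>e. is_right_identity n (triangle n a b c) e)
       \<and> \<not> (\<exists>e. is_left_identity n (triangle n a b c) e)"
proof
  have ab: "a < n" "b < n" "c < n" using assms(2-4) by (auto simp: chain_def)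
  define r where "r = (\<lambda>y. if y < n then (if y \<le> a then a else if y \<le> b then b else c) else 0)"
  have rT: "r \<in> triangle n a b c"
    unfolding triangle_def endo_hat_def chain_def r_def using ab assms(5,6) by auto
  show "\<exists>e. is_right_identity n (triangle n a b c) e"
  proof (intro exI)
    show "is_right_identity n (triangle n a b c) r"
      unfolding is_right_identity_def
    proof (intro conjI ballI rT)
      fix x assume x: "x \<in> triangle n a b c"
      show "endo_mult n x r = x"
      proof
        fix y
        show "endo_mult n x r y = x y"
        proof (cases "y \<in> chain n")
          case True
          then have "x y \<in> {a,b,c}" using x unfolding triangle_def by auto
          then show ?thesis using True ab assms(5,6) by (auto simp: endo_mult_def r_def)
        next
          case False
          then show ?thesis using x by (auto simp: endo_mult_def triangle_def endo_hat_def)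
        qed
      qed
    qed
  qed
  show "\<not> (\<exists>e. is_left_identity n (triangle n a b c) e)"
  proof
    assume "\<exists>e. is_left_identity n (triangle n a b c) e"
    then obtain e where eT: "e \<in> triangle n a b c"
      and eL: "\<And>x. x \<in> triangle n a b c \<Longrightarrow> endo_mult n e x = x"
      unfolding is_left_identity_def by blast
    have "\<exists>d\<in>{0,1,2,3::nat}. d \<notin> {a,b,c}"
    proof (rule ccontr)
      assume "\<not> ?thesis"
      then have "{0,1,2,3::nat} \<subseteq> {a,b,c}" by auto
      then have "card {0,1,2,3::nat} \<le> card {a,b,c}" by (intro card_mono) auto
      moreover have "card {a,b,c} \<le> 3" by (rule order_trans[OF card_insert_le_m1]) (auto simp: card_insert_le_m1 intro: order_trans[OF card_insert_le_m1])
      ultimately show False by simp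
    qed
    then obtain d where d0: "d \<in> {0,1,2,3::nat}" "d \<notin> {a,b,c}" by blast
    then have d: "d < 4" "d \<notin> {a,b,c}" by auto
    have dn: "d < n" using d assms(1) by simp
    have "e ` chain n \<subseteq> {a,b,c}" using eT by (simp add: triangle_def)
    moreover have "d \<in> chain n" using dn by (simp add: chain_def)
    ultimately have ed: "e d \<in> {a,b,c}" by (rule subsetD[OF _ imageI])
    then have edn: "e d < n" using ab by auto
    have ne: "e d \<noteq> d" using ed d by auto
    define t where "t = max d (e d)"
    define x where "x = (\<lambda>y. if y < n then (if y < t then a else b) else 0)"
    have xT: "x \<in> triangle n a b c"
      unfolding triangle_def endo_hat_def chain_def x_def using ab assms(5,6) by auto
    have "endo_mult n e x d = x d" using eL[OF xT] by simp
    then have "x (e d) = x d" using dn by (simp add: endo_mult_def chain_def)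
    moreover have "x (e d) \<noteq> x d" using ne dn edn assms(5) unfolding x_def t_def by auto
    ultimately show False by simp
  qed
qed

end
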